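(* Let $f,g\colon X\to Y$ be morphisms in $\mathbf{CompOrd}$ having a common retraction $k\colon Y\to X$ (i.e. $k\circ f=k\circ g=1_X$), let $h\colon E\to X$ be an equalizer of $f$ and $g$ in $\mathbf{CompOrd}$, and let $K$ be a closed subset of $X$. Then: (1) if $\uparrow f[K]=\uparrow g[K]$, then $\uparrow K=\uparrow(K\cap\operatorname{im}h)$; (2) if $\downarrow f[K]=\downarrow g[K]$, then $\downarrow K=\downarrow(K\cap\operatorname{im}h)$; (3) if $\updownarrow f[K]=\updownarrow g[K]$, then $\updownarrow K=\updownarrow(K\cap\operatorname{im}h)$.
   Context: $\mathbf{CompOrd}$ is the category of compact ordered spaces (compact Hausdorff spaces with a partial order closed in $X\times X$) and continuous order-preserving maps. For a subset $Y$ of a poset, $\uparrow Y$, $\downarrow Y$ denote up- and down-closure and $\updownarrow Y=\uparrow Y\cap\downarrow Y$. *)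

theory Defs
  imports "HOL-Analysis.Analysis"
begin

definition comp_ord :: "'a topology \<Rightarrow> ('a \<Rightarrow> 'a \<Rightarrow> bool) \<Rightarrow> bool" where
  "comp_ord T le \<longleftrightarrow>
     compact_space T \<and> Hausdorff_space T \<and>
     (\<forall>x\<in>topspace T. le x x) \<and>
     (\<forall>x\<in>topspace T. \<forall>y\<in>topspace T. le x y \<and> le y x \<longrightarrow> x = y) \<and>
     (\<forall>x\<in>topspace T. \<forall>y\<in>topspace T. \<forall>z\<in>topspace T. le x y \<and> le y z \<longrightarrow> le x z) \<and>
     closedin (prod_topology T T) {(x, y). x \<in> topspace T \<and> y \<in> topspace T \<and> le x y}"

definition comp_ord_hom ::
  "'a topology \<Rightarrow> ('a \<Rightarrow> 'a \<Rightarrow> bool) \<Rightarrow> 'b topology \<Rightarrow> ('b \<Rightarrow> 'b \<Rightarrow> bool) \<Rightarrow> ('a \<Rightarrow> 'b) \<Rightarrow> bool" where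
  "comp_ord_hom T le T' le' f \<longleftrightarrow>
     continuous_map T T' f \<and>
     (\<forall>x\<in>topspace T. \<forall>y\<in>topspace T. le x y \<longrightarrow> le' (f x) (f y))"

definition up_cl :: "'a set \<Rightarrow> ('a \<Rightarrow> 'a \<Rightarrow> bool) \<Rightarrow> 'a set \<Rightarrow> 'a set" where
  "up_cl S le A = {y\<in>S. \<exists>x\<in>A. le x y}"

definition down_cl :: "'a set \<Rightarrow> ('a \<Rightarrow> 'a \<Rightarrow> bool) \<Rightarrow> 'a set \<Rightarrow> 'a set" where
  "down_cl S le A = {y\<in>S. \<exists>x\<in>A. le y x}"

definition updown_cl :: "'a set \<Rightarrow> ('a \<Rightarrow> 'a \<Rightarrow> bool) \<Rightarrow> 'a set \<Rightarrow> 'a set" where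
  "updown_cl S le A = up_cl S le A \<inter> down_cl S le A"

text \<open>Test objects range over compact ordered spaces whose points are of the type 'x of X. Uniqueness of the mediating map is up to equality on the carrier.\<close>
definition comp_ord_equalizer ::
  "'e topology \<Rightarrow> ('e \<Rightarrow> 'e \<Rightarrow> bool) \<Rightarrow> 'x topology \<Rightarrow> ('x \<Rightarrow> 'x \<Rightarrow> bool) \<Rightarrow>
   'y topology \<Rightarrow> ('y \<Rightarrow> 'y \<Rightarrow> bool) \<Rightarrow> ('x \<Rightarrow> 'y) \<Rightarrow> ('x \<Rightarrow> 'y) \<Rightarrow> ('e \<Rightarrow> 'x) \<Rightarrow> bool" where
  "comp_ord_equalizer TE leE TX leX TY leY f g h \<longleftrightarrow>
     comp_ord TE leE \<and>
     comp_ord_hom TE leE TX leX h \<and>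
     (\<forall>e\<in>topspace TE. f (h e) = g (h e)) \<and>
     (\<forall>(TZ :: 'x topology) leZ m.
        comp_ord TZ leZ \<and> comp_ord_hom TZ leZ TX leX m \<and>
        (\<forall>z\<in>topspace TZ. f (m z) = g (m z)) \<longrightarrow>
        (\<exists>u. comp_ord_hom TZ leZ TE leE u \<and> (\<forall>z\<in>topspace TZ. h (u z) = m z) \<and>
             (\<forall>u'. comp_ord_hom TZ leZ TE leE u' \<and> (\<forall>z\<in>topspace TZ. h (u' z) = m z) \<longrightarrow>
                   (\<forall>z\<in>topspace TZ. u' z = u z))))"

end

theory Submission
  imports Defs
begin

lemma down_set_closed:
  assumes X: "comp_ord T le" and l: "l \<in> topspace T"
  shows "closedin T {y \<in> topspace T. le y l}"
proof -
  have G: "closedin (prod_topology T T) {(x, y). x \<in> topspace T \<and> y \<in> topspace T \<and> le x y}"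
    using X by (simp add: comp_ord_def)
  have c: "continuous_map T (prod_topology T T) (\<lambda>y. (y, l))"
    using l by (intro continuous_map_pairedI) auto
  have "closedin T {y \<in> topspace T. (y, l) \<in> {(x, y). x \<in> topspace T \<and> y \<in> topspace T \<and> le x y}}"
    by (rule closedin_continuous_map_preimage[OF c G])
  moreover have "{y \<in> topspace T. (y, l) \<in> {(x, y). x \<in> topspace T \<and> y \<in> topspace T \<and> le x y}}
     = {y \<in> topspace T. le y l}" using l by auto
  ultimately show ?thesis by simp
qed

lemma comp_ord_rev:
  assumes X: "comp_ord T le"
  shows "comp_ord T (\<lambda>a b. le b a)"
proof -
  have G: "closedin (prod_topology T T) {(x, y). x \<in> topspace T \<and> y \<in> topspace T \<and> le x y}"
    using X by (simp add: comp_ord_def)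
  have c: "continuous_map (prod_topology T T) (prod_topology T T) (\<lambda>p. (snd p, fst p))"
    by (rule continuous_map_pairedI[OF continuous_map_snd continuous_map_fst])
  have P: "closedin (prod_topology T T) {p \<in> topspace (prod_topology T T). (snd p, fst p) \<in> {(x, y). x \<in> topspace T \<and> y \<in> topspace T \<and> le x y}}"
    by (rule closedin_continuous_map_preimage[OF c G])
  have eq: "{p \<in> topspace (prod_topology T T). (snd p, fst p) \<in> {(x, y). x \<in> topspace T \<and> y \<in> topspace T \<and> le x y}}
     = {(x, y). x \<in> topspace T \<and> y \<in> topspace T \<and> le y x}"
    apply (rule set_eqI)
    subgoal for p by (cases p) (simp add: topspace_prod_topology, blast)
    done
  from P have G2: "closedin (prod_topology T T) {(x, y). x \<in> topspace T \<and> y \<in> topspace T \<and> le y x}"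
    unfolding eq .
  have A: "compact_space T" "Hausdorff_space T" "\<forall>x\<in>topspace T. le x x"
    "\<forall>x\<in>topspace T. \<forall>y\<in>topspace T. le x y \<and> le y x \<longrightarrow> x = y"
    "\<forall>x\<in>topspace T. \<forall>y\<in>topspace T. \<forall>z\<in>topspace T. le x y \<and> le y z \<longrightarrow> le x z"
    using X unfolding comp_ord_def by blast+
  show ?thesis unfolding comp_ord_def
  proof (intro conjI)
    show "\<forall>x\<in>topspace T. \<forall>y\<in>topspace T. le y x \<and> le x y \<longrightarrow> x = y"
      using A(4) by blast
    show "\<forall>x\<in>topspace T. \<forall>y\<in>topspace T. \<forall>z\<in>topspace T. le y x \<and> le z y \<longrightarrow> le z x"
      using A(5) by blast
  qed (use A G2 in blast)+
qed

lemma finite_chain_min: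
  assumes "finite L" "L \<noteq> {}" "L \<subseteq> S"
    and tot: "\<forall>a\<in>L. \<forall>b\<in>L. le a b \<or> le b a"
    and refl: "\<forall>x\<in>S. le x x"
    and trans: "\<forall>x\<in>S. \<forall>y\<in>S. \<forall>z\<in>S. le x y \<and> le y z \<longrightarrow> le x z"
  shows "\<exists>l0\<in>L. \<forall>l\<in>L. le l0 l"
  using assms(1,2,3,4)
proof (induction L rule: finite_ne_induct)
  case (singleton x)
  then show ?case using refl by auto
next
  case (insert x F)
  then obtain l0 where l0: "l0 \<in> F" "\<forall>l\<in>F. le l0 l" by auto
  show ?case
  proof (cases "le x l0")
    case True
    have "\<forall>l\<in>insert x F. le x l"
    proof
      fix l assume "l \<in> insert x F"
      then show "le x l"
      proof
        assume "l = x" then show ?thesis using refl insert.prems by auto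
      next
        assume lF: "l \<in> F"
        have "x \<in> S" "l0 \<in> S" "l \<in> S" using insert.prems l0 lF by auto
        then show ?thesis using trans True l0 lF by blast
      qed
    qed
    then show ?thesis by blast
  next
    case False
    then have "le l0 x" using insert.prems l0 by auto
    then show ?thesis using l0 by auto
  qed
qed

lemma po_rel:
  assumes refl: "\<forall>x\<in>S. le x x"
   and anti: "\<forall>x\<in>S. \<forall>y\<in>S. le x y \<and> le y x \<longrightarrow> x = y"
   and trans: "\<forall>x\<in>S. \<forall>y\<in>S. \<forall>z\<in>S. le x y \<and> le y z \<longrightarrow> le x z"
   and CT: "C \<subseteq> S"
  shows "partial_order_on C (relation_of (\<lambda>a b. le b a) C)"
  unfolding partial_order_on_def preorder_on_def
proof (intro conjI)
  show "relation_of (\<lambda>a b. le b a) C \<subseteq> C \<times> C" by (auto simp: relation_of_def)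
  show "refl_on C (relation_of (\<lambda>a b. le b a) C)"
    unfolding refl_on_def relation_of_def using refl CT by blast
  show "trans (relation_of (\<lambda>a b. le b a) C)"
    unfolding trans_def relation_of_def using trans CT by blast
  show "antisym (relation_of (\<lambda>a b. le b a) C)"
    unfolding antisym_def relation_of_def using anti CT by blast
qed

lemma min_exists:
  assumes X: "comp_ord T le" and C: "closedin T C" and ne: "C \<noteq> {}"
  shows "\<exists>m\<in>C. \<forall>a\<in>C. le a m \<longrightarrow> a = m"
proof -
  have CT: "C \<subseteq> topspace T" using C closedin_subset by auto
  have refl: "\<forall>x\<in>topspace T. le x x"
   and anti: "\<forall>x\<in>topspace T. \<forall>y\<in>topspace T. le x y \<and> le y x \<longrightarrow> x = y"
   and trans: "\<forall>x\<in>topspace T. \<forall>y\<in>topspace T. \<forall>z\<in>topspace T. le x y \<and> le y z \<longrightarrow> le x z"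
   and cs: "compact_space T"
    using X unfolding comp_ord_def by blast+
  let ?P = "\<lambda>a b. le b a"
  have po: "partial_order_on C (relation_of ?P C)"
    by (rule po_rel[OF refl anti trans CT])
  have ch: "\<exists>u \<in> C. \<forall>a \<in> L. ?P a u" if L: "L \<in> Chains (relation_of ?P C)" for L
  proof (cases "L = {}")
    case True then show ?thesis using ne by blast
  next
    case False
    have LC: "L \<subseteq> C" using L by (rule Chains_relation_of)
    have LT: "L \<subseteq> topspace T" using LC CT by blast
    have tot: "\<forall>a\<in>L. \<forall>b\<in>L. le a b \<or> le b a"
      using L unfolding Chains_def relation_of_def by blast
    define D where "D = (\<lambda>l. C \<inter> {y \<in> topspace T. le y l})"
    define U where "U = D ` L"
    have Dcl: "closedin T (D l)" if "l \<in> L" for l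
      unfolding D_def using closedin_Int[OF C down_set_closed[OF X]] LT that by blast
    have "\<forall>V\<in>U. closedin T V" unfolding U_def using Dcl by blast
    moreover have "\<forall>F. finite F \<and> F \<subseteq> U \<longrightarrow> \<Inter>F \<noteq> {}"
    proof (intro allI impI, elim conjE)
      fix F assume fF: "finite F" and FU: "F \<subseteq> U"
      obtain L' where L': "L' \<subseteq> L" "finite L'" "F = D ` L'"
        using finite_subset_image[OF fF FU[unfolded U_def]] by blast
      show "\<Inter>F \<noteq> {}"
      proof (cases "L' = {}")
        case True then show ?thesis using L' by simp
      next
        case False
        have L'T: "L' \<subseteq> topspace T" using L'(1) LT by blast
        have tot': "\<forall>a\<in>L'. \<forall>b\<in>L'. le a b \<or> le b a" using tot L'(1) by blast
        obtain l0 where l0: "l0 \<in> L'" "\<forall>l\<in>L'. le l0 l"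
          using finite_chain_min[OF L'(2) False L'T tot' refl trans] by blast
        have l0C: "l0 \<in> C" "l0 \<in> topspace T" using l0(1) L'(1) LC CT by blast+
        have "l0 \<in> D l" if "l \<in> L'" for l
          unfolding D_def using l0C l0(2) that by blast
        then have "l0 \<in> \<Inter>F" using L'(3) by blast
        then show ?thesis by blast
      qed
    qed
    ultimately have "\<Inter>U \<noteq> {}"
      using cs unfolding compact_space_fip by blast
    then obtain u where u: "u \<in> \<Inter>U" by blast
    obtain l1 where "l1 \<in> L" using False by blast
    then have "u \<in> D l1" using u unfolding U_def by blast
    then have "u \<in> C" unfolding D_def by blast
    moreover have "\<forall>a\<in>L. le u a"
    proof
      fix a assume "a \<in> L"
      then have "u \<in> D a" using u unfolding U_def by blast
      then show "le u a" unfolding D_def by blast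
    qed
    ultimately show ?thesis by blast
  qed
  show ?thesis using predicate_Zorn[OF po ch] by auto
qed

lemma core:
  assumes X: "comp_ord TX leX"
    and antiY: "\<forall>a\<in>topspace TY. \<forall>b\<in>topspace TY. leY a b \<and> leY b a \<longrightarrow> a = b"
    and fT: "f ` topspace TX \<subseteq> topspace TY" and gT: "g ` topspace TX \<subseteq> topspace TY"
    and km: "\<forall>a\<in>topspace TY. \<forall>b\<in>topspace TY. leY a b \<longrightarrow> leX (k a) (k b)"
    and kf: "\<forall>x\<in>topspace TX. k (f x) = x" and kg: "\<forall>x\<in>topspace TX. k (g x) = x"
    and K: "closedin TX K"
    and fg: "f ` K \<subseteq> up_cl (topspace TY) leY (g ` K)"
    and gf: "g ` K \<subseteq> up_cl (topspace TY) leY (f ` K)"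
    and x: "x \<in> K"
  shows "\<exists>y\<in>K. leX y x \<and> f y = g y"
proof -
  have KT: "K \<subseteq> topspace TX" using K closedin_subset by auto
  have refl: "\<forall>x\<in>topspace TX. leX x x"
   and trans: "\<forall>x\<in>topspace TX. \<forall>y\<in>topspace TX. \<forall>z\<in>topspace TX. leX x y \<and> leX y z \<longrightarrow> leX x z"
    using X unfolding comp_ord_def by blast+
  define C where "C = K \<inter> {y \<in> topspace TX. leX y x}"
  have "closedin TX C" unfolding C_def using K down_set_closed[OF X] x KT by auto
  moreover have "x \<in> C" unfolding C_def using x KT refl by auto
  ultimately obtain m where m: "m \<in> C" "\<forall>a\<in>C. leX a m \<longrightarrow> a = m"
    using min_exists[OF X] by blast
  have mK: "m \<in> K" "m \<in> topspace TX" "leX m x" using m KT unfolding C_def by auto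
  have step: "leY (q m) (p m)" if pq: "p ` K \<subseteq> up_cl (topspace TY) leY (q ` K)"
     "p ` topspace TX \<subseteq> topspace TY" "q ` topspace TX \<subseteq> topspace TY"
     "\<forall>x\<in>topspace TX. k (p x) = x" "\<forall>x\<in>topspace TX. k (q x) = x" for p q
  proof -
    have "p m \<in> up_cl (topspace TY) leY (q ` K)" using pq(1) mK(1) by blast
    then obtain y1 where y1: "y1 \<in> K" "leY (q y1) (p m)"
      unfolding up_cl_def by blast
    have y1T: "y1 \<in> topspace TX" using y1(1) KT by blast
    have a: "q y1 \<in> topspace TY" using pq(3) y1T by blast
    have b: "p m \<in> topspace TY" using pq(2) mK(2) by blast
    have "leX (k (q y1)) (k (p m))" using km a b y1(2) by blast
    then have y1m: "leX y1 m" using pq(4) pq(5) y1T mK(2) by simp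
    have "xT": "x \<in> topspace TX" using x KT by blast
    have "leX y1 x" using trans y1T mK(2) xT y1m mK(3) by blast
    then have "y1 \<in> C" unfolding C_def using y1(1) y1T by blast
    then have "y1 = m" using m(2) y1m by blast
    then show ?thesis using y1 by simp
  qed
  have 1: "leY (g m) (f m)" using step[of f g] fg fT gT kf kg by blast
  have 2: "leY (f m) (g m)" using step[of g f] gf fT gT kf kg by blast
  have "f m \<in> topspace TY" "g m \<in> topspace TY" using fT gT mK(2) by blast+
  then have "f m = g m" using antiY 1 2 by blast
  then show ?thesis using mK by blast
qed

lemma core_up:
  assumes X: "comp_ord TX leX"
    and antiY: "\<forall>a\<in>topspace TY. \<forall>b\<in>topspace TY. leY a b \<and> leY b a \<longrightarrow> a = b"
    and fT: "f ` topspace TX \<subseteq> topspace TY" and gT: "g ` topspace TX \<subseteq> topspace TY"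
    and km: "\<forall>a\<in>topspace TY. \<forall>b\<in>topspace TY. leY a b \<longrightarrow> leX (k a) (k b)"
    and kf: "\<forall>x\<in>topspace TX. k (f x) = x" and kg: "\<forall>x\<in>topspace TX. k (g x) = x"
    and K: "closedin TX K"
    and fg: "f ` K \<subseteq> up_cl (topspace TY) leY (g ` K)"
    and gf: "g ` K \<subseteq> up_cl (topspace TY) leY (f ` K)"
    and I: "\<forall>x\<in>K. f x = g x \<longrightarrow> x \<in> I"
  shows "up_cl (topspace TX) leX K = up_cl (topspace TX) leX (K \<inter> I)"
proof
  show "up_cl (topspace TX) leX (K \<inter> I) \<subseteq> up_cl (topspace TX) leX K"
    unfolding up_cl_def by auto
  have KT: "K \<subseteq> topspace TX" using K closedin_subset by auto
  have trans: "\<forall>x\<in>topspace TX. \<forall>y\<in>topspace TX. \<forall>z\<in>topspace TX. leX x y \<and> leX y z \<longrightarrow> leX x z"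
    using X unfolding comp_ord_def by blast+
  show "up_cl (topspace TX) leX K \<subseteq> up_cl (topspace TX) leX (K \<inter> I)"
  proof
    fix z assume "z \<in> up_cl (topspace TX) leX K"
    then obtain x where x: "x \<in> K" "leX x z" "z \<in> topspace TX" unfolding up_cl_def by auto
    obtain y where y: "y \<in> K" "leX y x" "f y = g y"
      using core[OF X antiY fT gT km kf kg K fg gf x(1)] by blast
    have "leX y z" using trans y x KT by blast
    then show "z \<in> up_cl (topspace TX) leX (K \<inter> I)"
      unfolding up_cl_def using x y I by auto
  qed
qed

lemma up_rev: "up_cl S (\<lambda>a b. le b a) A = down_cl S le A"
  by (simp add: up_cl_def down_cl_def)

lemma core_down:
  assumes X: "comp_ord TX leX"
    and antiY: "\<forall>a\<in>topspace TY. \<forall>b\<in>topspace TY. leY a b \<and> leY b a \<longrightarrow> a = b"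
    and fT: "f ` topspace TX \<subseteq> topspace TY" and gT: "g ` topspace TX \<subseteq> topspace TY"
    and km: "\<forall>a\<in>topspace TY. \<forall>b\<in>topspace TY. leY a b \<longrightarrow> leX (k a) (k b)"
    and kf: "\<forall>x\<in>topspace TX. k (f x) = x" and kg: "\<forall>x\<in>topspace TX. k (g x) = x"
    and K: "closedin TX K"
    and fg: "f ` K \<subseteq> down_cl (topspace TY) leY (g ` K)"
    and gf: "g ` K \<subseteq> down_cl (topspace TY) leY (f ` K)"
    and I: "\<forall>x\<in>K. f x = g x \<longrightarrow> x \<in> I"
  shows "down_cl (topspace TX) leX K = down_cl (topspace TX) leX (K \<inter> I)"
proof -
  have "up_cl (topspace TX) (\<lambda>a b. leX b a) K = up_cl (topspace TX) (\<lambda>a b. leX b a) (K \<inter> I)"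
    apply (rule core_up[OF comp_ord_rev[OF X], of TY "\<lambda>a b. leY b a" f g k])
    using antiY fT gT km kf kg K fg gf I by (auto simp: up_rev)
  then show ?thesis by (simp add: up_rev)
qed

lemma eq_in_image:
  assumes h: "comp_ord_equalizer TE leE TX leX TY leY f g h"
    and X: "comp_ord TX leX" and x: "x \<in> topspace TX" and fx: "f x = g x"
  shows "x \<in> h ` topspace TE"
proof -
  let ?Z = "subtopology TX {x}"
  have tZ: "topspace ?Z = {x}" using x by auto
  have "comp_ord ?Z leX"
    unfolding comp_ord_def
  proof (intro conjI)
    show "compact_space ?Z" using x by (intro compact_space_subtopology) simp
    show "Hausdorff_space ?Z" using X by (intro Hausdorff_space_subtopology) (simp add: comp_ord_def)
    have "{(a, b). a \<in> topspace ?Z \<and> b \<in> topspace ?Z \<and> leX a b} = topspace (prod_topology ?Z ?Z)"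
      using tZ X x by (auto simp: comp_ord_def)
    then show "closedin (prod_topology ?Z ?Z) {(a, b). a \<in> topspace ?Z \<and> b \<in> topspace ?Z \<and> leX a b}"
      by (metis closedin_topspace)
  qed (use tZ X x in \<open>auto simp: comp_ord_def\<close>)
  moreover have "comp_ord_hom ?Z leX TX leX id"
    unfolding comp_ord_hom_def by auto
  moreover have "\<forall>z\<in>topspace ?Z. f (id z) = g (id z)" using tZ fx by auto
  ultimately obtain u where u: "comp_ord_hom ?Z leX TE leE u" "\<forall>z\<in>topspace ?Z. h (u z) = id z"
    using h unfolding comp_ord_equalizer_def by blast
  have "u x \<in> topspace TE" using u(1) tZ unfolding comp_ord_hom_def
    by (metis continuous_map_def insertI1 Pi_iff)
  moreover have "h (u x) = x" using u(2) tZ by auto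
  ultimately show ?thesis by (metis image_eqI)
qed

theorem lemma3p22:
  fixes TX :: "'x topology" and leX :: "'x \<Rightarrow> 'x \<Rightarrow> bool"
    and TY :: "'y topology" and leY :: "'y \<Rightarrow> 'y \<Rightarrow> bool"
    and TE :: "'e topology" and leE :: "'e \<Rightarrow> 'e \<Rightarrow> bool"
    and f g :: "'x \<Rightarrow> 'y" and k :: "'y \<Rightarrow> 'x" and h :: "'e \<Rightarrow> 'x"
    and K :: "'x set"
  assumes X: "comp_ord TX leX" and Y: "comp_ord TY leY"
    and f: "comp_ord_hom TX leX TY leY f" and g: "comp_ord_hom TX leX TY leY g"
    and k: "comp_ord_hom TY leY TX leX k"
    and kf: "\<forall>x\<in>topspace TX. k (f x) = x" and kg: "\<forall>x\<in>topspace TX. k (g x) = x"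
    and h: "comp_ord_equalizer TE leE TX leX TY leY f g h"
    and K: "closedin TX K"
  shows "(up_cl (topspace TY) leY (f ` K) = up_cl (topspace TY) leY (g ` K) \<longrightarrow>
            up_cl (topspace TX) leX K = up_cl (topspace TX) leX (K \<inter> h ` topspace TE))
       \<and> (down_cl (topspace TY) leY (f ` K) = down_cl (topspace TY) leY (g ` K) \<longrightarrow>
            down_cl (topspace TX) leX K = down_cl (topspace TX) leX (K \<inter> h ` topspace TE))
       \<and> (updown_cl (topspace TY) leY (f ` K) = updown_cl (topspace TY) leY (g ` K) \<longrightarrow>
            updown_cl (topspace TX) leX K = updown_cl (topspace TX) leX (K \<inter> h ` topspace TE))"
proof -
  have KT: "K \<subseteq> topspace TX" using K closedin_subset by auto
  have antiY: "\<forall>a\<in>topspace TY. \<forall>b\<in>topspace TY. leY a b \<and> leY b a \<longrightarrow> a = b"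
   and reflY: "\<forall>a\<in>topspace TY. leY a a"
    using Y unfolding comp_ord_def by blast+
  have fT: "f ` topspace TX \<subseteq> topspace TY" and gT: "g ` topspace TX \<subseteq> topspace TY"
    using continuous_map_image_subset_topspace f g unfolding comp_ord_hom_def by blast+
  have km: "\<forall>a\<in>topspace TY. \<forall>b\<in>topspace TY. leY a b \<longrightarrow> leX (k a) (k b)"
    using k by (simp add: comp_ord_hom_def)
  have I: "\<forall>x\<in>K. f x = g x \<longrightarrow> x \<in> h ` topspace TE"
    using eq_in_image[OF h X] KT by blast
  have fup: "f ` K \<subseteq> up_cl (topspace TY) leY (f ` K)" "g ` K \<subseteq> up_cl (topspace TY) leY (g ` K)"
    using fT gT KT reflY unfolding up_cl_def by blast+
  have fdn: "f ` K \<subseteq> down_cl (topspace TY) leY (f ` K)" "g ` K \<subseteq> down_cl (topspace TY) leY (g ` K)"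
    using fT gT KT reflY unfolding down_cl_def by blast+
  show ?thesis
  proof (intro conjI impI)
    assume e: "up_cl (topspace TY) leY (f ` K) = up_cl (topspace TY) leY (g ` K)"
    show "up_cl (topspace TX) leX K = up_cl (topspace TX) leX (K \<inter> h ` topspace TE)"
      by (rule core_up[OF X antiY fT gT km kf kg K _ _ I]) (use e fup in auto)
  next
    assume e: "down_cl (topspace TY) leY (f ` K) = down_cl (topspace TY) leY (g ` K)"
    show "down_cl (topspace TX) leX K = down_cl (topspace TX) leX (K \<inter> h ` topspace TE)"
      by (rule core_down[OF X antiY fT gT km kf kg K _ _ I]) (use e fdn in auto)
  next
    assume e: "updown_cl (topspace TY) leY (f ` K) = updown_cl (topspace TY) leY (g ` K)"
    have u1: "f ` K \<subseteq> up_cl (topspace TY) leY (g ` K)" "g ` K \<subseteq> up_cl (topspace TY) leY (f ` K)"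
     and d1: "f ` K \<subseteq> down_cl (topspace TY) leY (g ` K)" "g ` K \<subseteq> down_cl (topspace TY) leY (f ` K)"
      using e fup fdn unfolding updown_cl_def by blast+
    show "updown_cl (topspace TX) leX K = updown_cl (topspace TX) leX (K \<inter> h ` topspace TE)"
      unfolding updown_cl_def
      using core_up[OF X antiY fT gT km kf kg K u1 I] core_down[OF X antiY fT gT km kf kg K d1 I]
      by simp
  qed
qed

end
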